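(* In the setting below, assume $$15.2\sqrt{\frac{\mathbb E\|X-\mu\|^4-(\mathrm{tr}(\Sigma))^2}{(\mathrm{tr}(\Sigma))^2}}\le\Big(\frac12-178\frac{\log(1.4/\delta)}{n}\Big)\sqrt{\frac{n}{\log(1.4/\delta)}}.$$ Let $r_n=11\sqrt2\sqrt{\hat T\log(1.4/\delta)/n}$. Then $$\Pr\big(\mu\in B(\hat\mu,r_n)\big)\ge1-2\delta,$$ where $B(h,r)$ is the closed ball of radius $r$ centered at $h$.
   Context: Let $\mathbb H$ be a separable Hilbert space. Let $X_1,\ldots,X_n\in\mathbb H$ be i.i.d. copies of $X$ with mean $\mu$, covariance operator $\Sigma$, $0<\mathrm{tr}(\Sigma)=\mathbb E\|X-\mu\|^2$, and $\mathbb E\|X-\mu\|^4<\infty$. Let $\alpha_\ast=7/18$ and $p_\ast=0.1$. For $0<p<a<\tfrac12$, $\psi(a;p)=(1-a)\log\frac{1-a}{1-p}+a\log\frac ap$. Given $\delta\in(0,1)$, set $k=\lfloor\log(1/\delta)/\psi(\alpha_\ast;p_\ast)\rfloor+1$, and assume $k\le n/2$. Split $\{1,\ldots,n\}$ into disjoint groups $G_1,\ldots,G_k$ of size $\lfloor n/k\rfloor$. Define: - $\hat\mu_j=\frac1{|G_j|}\sum_{i\in G_j}X_i$; - $\hat\mu$ a geometric median of $\hat\mu_1,\ldots,\hat\mu_k$, i.e. any minimizer over $y\in\mathbb H$ of $\sum_j\|y-\hat\mu_j\|$; - $\hat T_j=\frac1{|G_j|}\sum_{i\in G_j}\|X_i-\hat\mu_j\|^2$;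 - $\hat T$ any median of the reals $\hat T_1,\ldots,\hat T_k$, i.e. any minimizer over $y\in\mathbb R$ of $\sum_j|y-\hat T_j|$. *)

theory Defs
  imports "HOL-Probability.Probability"
begin

text \<open>Binomial Kullback-Leibler type function psi(a;p), for 0 < p < a < 1/2.\<close>
definition psi :: "real \<Rightarrow> real \<Rightarrow> real" where
  "psi a p = (1 - a) * ln ((1 - a) / (1 - p)) + a * ln (a / p)"

definition num_groups :: "real \<Rightarrow> nat" where
  "num_groups \<delta> = nat \<lfloor>ln (1 / \<delta>) / psi (7/18) (1/10)\<rfloor> + 1"

definition is_geometric_median :: "nat \<Rightarrow> (nat \<Rightarrow> 'a::real_normed_vector) \<Rightarrow> 'a \<Rightarrow> bool" where
  "is_geometric_median k v m \<longleftrightarrow>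
     (\<forall>y. (\<Sum>j<k. norm (m - v j)) \<le> (\<Sum>j<k. norm (y - v j)))"

end

theory Submission
  imports Defs
begin

lemma norm_add_quad_bound:
  fixes a w :: "'a::real_inner"
  assumes "a \<noteq> 0" "0 \<le> t"
  shows "norm (a + t *\<^sub>R w) \<le> norm a + t * (a \<bullet> w) / norm a + t^2 * (norm w)^2 / (2 * norm a)"
proof -
  define A where "A = norm a"
  have A: "A > 0" using assms A_def by simp
  define sv where "sv = a \<bullet> w"
  define Wv where "Wv = (norm w)^2"
  have rhs: "norm a + t * (a \<bullet> w) / norm a + t^2 * (norm w)^2 / (2 * norm a)
        = (A^2 + t * sv + t^2*Wv/2) / A" using A unfolding A_def sv_def Wv_def
    by (simp add: field_simps power2_eq_square)
  have cs: "sv\<^sup>2 \<le> A^2 * Wv" unfolding sv_def A_def Wv_def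
    using Cauchy_Schwarz_ineq[of a w] by (simp add: power2_norm_eq_inner)
  have "2*A^2*(A^2 + t * sv + t^2*Wv/2) = (A^2 + t * sv)^2 + A^2*A^2 + t^2*(A^2*Wv - sv^2)"
    by (simp add: power2_eq_square algebra_simps)
  also have "\<dots> \<ge> 0" using cs by (intro add_nonneg_nonneg mult_nonneg_nonneg) auto
  finally have num: "A^2 + t * sv + t^2*Wv/2 \<ge> 0" using A
    by (simp add: zero_le_mult_iff)
  have n2: "(norm (a + t *\<^sub>R w))^2 = A^2 + 2*t * sv + t^2 * Wv"
    unfolding A_def sv_def Wv_def power2_norm_eq_inner
    by (simp add: inner_add_left inner_add_right inner_commute power2_eq_square algebra_simps)
  have "(norm (a + t *\<^sub>R w))^2 \<le> ((A^2 + t * sv + t^2*Wv/2) / A)^2"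
  proof -
    have "((A^2 + t * sv + t^2*Wv/2) / A)^2 * A^2 = (A^2 + t * sv + t^2*Wv/2)^2"
      using A by (simp add: power_divide)
    also have "\<dots> = A^2*(A^2 + 2*t * sv + t^2 * Wv) + (t * sv + t^2*Wv/2)^2"
      by (simp add: power2_eq_square algebra_simps)
    finally have "((A^2 + t * sv + t^2*Wv/2) / A)^2 * A^2 \<ge> (norm (a + t *\<^sub>R w))^2 * A^2"
      using n2 by (simp add: mult.commute)
    then show ?thesis using A by simp
  qed
  then have "norm (a + t *\<^sub>R w) \<le> (A^2 + t * sv + t^2*Wv/2) / A"
    by (rule power2_le_imp_le) (use num A in \<open>auto intro: divide_nonneg_pos\<close>)
  then show ?thesis using rhs by simp
qed

lemma angle_bound:
  fixes z v \<mu> :: "'a::real_inner"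
  assumes "norm (v - \<mu>) \<le> r" "r < norm (\<mu> - z)"
  shows "(z - v) \<bullet> (\<mu> - z) \<le> - sqrt ((norm (\<mu> - z))^2 - r^2) * norm (z - v)"
proof -
  define w where "w = \<mu> - z"
  define e where "e = \<mu> - v"
  define d where "d = norm w"
  define sv where "sv = e \<bullet> w"
  have a: "z - v = e - w" unfolding e_def w_def by simp
  have ne: "norm e \<le> r" using assms(1) unfolding e_def by (simp add: norm_minus_commute)
  have r0: "0 \<le> r" using assms(1) norm_ge_zero order_trans by blast
  have dr: "r < d" using assms(2) unfolding d_def w_def .
  have svb: "sv \<le> d * r" unfolding sv_def d_def
    using Cauchy_Schwarz_ineq2[of e w] ne norm_ge_zero
    by (metis abs_ge_self mult.commute mult_left_mono order_trans)
  have "d * r < d * d" using dr r0 by (intro mult_strict_left_mono) auto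
  then have pos: "d^2 - sv > 0" using svb by (simp add: power2_eq_square)
  have ip: "(z - v) \<bullet> (\<mu> - z) = sv - d^2" unfolding a w_def[symmetric] sv_def d_def
    by (simp add: inner_diff_left power2_norm_eq_inner)
  have na: "(norm (z - v))^2 = d^2 - 2 * sv + (norm e)^2" unfolding a sv_def d_def
    by (simp add: power2_norm_eq_inner inner_diff_left inner_diff_right inner_commute)
  have key: "(d^2 - r^2) * (norm (z - v))^2 \<le> (d^2 - sv)^2"
  proof -
    have "(d^2 - sv)^2 - (d^2 - r^2) * (norm (z - v))^2 = (sv - r^2)^2 + (r^2 - (norm e)^2) * (d^2 - r^2)"
      unfolding na by (simp add: power2_eq_square algebra_simps)
    moreover have "(r^2 - (norm e)^2) * (d^2 - r^2) \<ge> 0"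
      using ne r0 dr by (intro mult_nonneg_nonneg) (auto intro: power_mono)
    ultimately show ?thesis by (smt (verit) zero_le_power2)
  qed
  have "sqrt (d^2 - r^2) * norm (z - v) = sqrt ((d^2 - r^2) * (norm (z - v))^2)"
    by (simp add: real_sqrt_mult)
  also have "\<dots> \<le> sqrt ((d^2 - sv)^2)" using key by (rule real_sqrt_le_mono)
  also have "\<dots> = d^2 - sv" using pos by simp
  finally show ?thesis using ip unfolding d_def w_def by simp
qed

lemma sum_if_count:
  fixes P :: "nat \<Rightarrow> bool"
  shows "(\<Sum>j<k. (if P j then x else y)) = real (card {j\<in>{..<k}. P j}) * x + real (card {j\<in>{..<k}. \<not> P j}) * y"
proof -
  have "(\<Sum>j<k. (if P j then x else y)) = (\<Sum>j\<in>{j\<in>{..<k}. P j}. x) + (\<Sum>j\<in>{j\<in>{..<k}. \<not> P j}. y)"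
  proof -
    have e1: "{..<k} \<inter> {j. P j} = {j\<in>{..<k}. P j}" "{..<k} \<inter> - {j. P j} = {j\<in>{..<k}. \<not> P j}" by auto
    show ?thesis by (subst sum.If_cases) (simp_all add: e1)
  qed
  then show ?thesis by simp
qed

lemma card_split_count:
  fixes P :: "nat \<Rightarrow> bool"
  shows "card {j\<in>{..<k}. P j} + card {j\<in>{..<k}. \<not> P j} = k"
proof -
  have "card {j\<in>{..<k}. P j} + card {j\<in>{..<k}. \<not> P j} = card ({j\<in>{..<k}. P j} \<union> {j\<in>{..<k}. \<not> P j})"
    by (rule card_Un_disjoint[symmetric]) auto
  also have "{j\<in>{..<k}. P j} \<union> {j\<in>{..<k}. \<not> P j} = {..<k}" by auto
  finally show ?thesis by simp
qed

lemma median_lower: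
  fixes T :: "nat \<Rightarrow> real"
  assumes med: "is_geometric_median k T y"
    and few: "2 * card {j\<in>{..<k}. \<not> c \<le> T j} < k"
  shows "c \<le> y"
proof (rule ccontr)
  assume "\<not> c \<le> y"
  then have yc: "y < c" by simp
  define b where "b = card {j\<in>{..<k}. \<not> c \<le> T j}"
  define g where "g = card {j\<in>{..<k}. c \<le> T j}"
  have gb: "g + b = k" unfolding g_def b_def using card_split_count[of k "\<lambda>j. c \<le> T j"] by simp
  have "(\<Sum>j<k. norm (c - T j)) \<le> (\<Sum>j<k. norm (y - T j) + (if c \<le> T j then -(c - y) else (c - y)))"
    by (intro sum_mono) (use yc in auto)
  also have "\<dots> = (\<Sum>j<k. norm (y - T j)) + (real g * (-(c-y)) + real b * (c - y))"
    unfolding sum.distrib sum_if_count g_def b_def by simp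
  also have "\<dots> < (\<Sum>j<k. norm (y - T j))"
  proof -
    have "real b < real g" using few gb unfolding b_def g_def by linarith
    then have "real b * (c - y) < real g * (c - y)" using yc by (intro mult_strict_right_mono) auto
    then show ?thesis by (simp add: algebra_simps)
  qed
  finally show False using med unfolding is_geometric_median_def by (meson not_le)
qed

lemma gm_bound:
  fixes v :: "nat \<Rightarrow> 'a::real_inner" and \<mu> z :: 'a
  assumes med: "is_geometric_median k v z"
    and r0: "0 \<le> r" and C1: "1 < C"
    and cnt: "C^2 * (real (card {j\<in>{..<k}. \<not> norm (v j - \<mu>) \<le> r}))^2
               \<le> (C^2 - 1) * (real (card {j\<in>{..<k}. norm (v j - \<mu>) \<le> r}))^2"
    and gpos: "card {j\<in>{..<k}. norm (v j - \<mu>) \<le> r} > 0"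
  shows "norm (z - \<mu>) \<le> C * r"
proof (rule ccontr)
  assume "\<not> norm (z - \<mu>) \<le> C * r"
  define w where "w = \<mu> - z"
  define d where "d = norm w"
  have dC: "C * r < d" using \<open>\<not> _\<close> unfolding d_def w_def by (simp add: norm_minus_commute)
  have Cr: "r \<le> C * r" using mult_right_mono[of 1 C r] C1 r0 by simp
  have dr: "r < d" using dC Cr by simp
  have d0: "0 < d" using dr r0 by simp
  define b where "b = card {j\<in>{..<k}. \<not> norm (v j - \<mu>) \<le> r}"
  define g where "g = card {j\<in>{..<k}. norm (v j - \<mu>) \<le> r}"
  define sq where "sq = sqrt (d^2 - r^2)"
  define Q where "Q = d^2 / (2 * (d - r))"
  have Q0: "Q > 0" unfolding Q_def using d0 dr by simp
  have tm: "norm (z + t *\<^sub>R w - v j) \<le> norm (z - v j)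
     + (if norm (v j - \<mu>) \<le> r then - t * sq + t^2 * Q else t * d)" if t0: "0 \<le> t" for t j
  proof (cases "norm (v j - \<mu>) \<le> r")
    case True
    define a where "a = z - v j"
    have ad: "d - r \<le> norm a"
    proof -
      have "d \<le> norm (\<mu> - v j) + norm (v j - z)" unfolding d_def w_def
        using norm_triangle_ineq[of "\<mu> - v j" "v j - z"] by simp
      then show ?thesis unfolding a_def using True by (simp add: norm_minus_commute)
    qed
    then have a0: "norm a > 0" using dr by linarith
    have "norm (a + t *\<^sub>R w) \<le> norm a + t * (a \<bullet> w) / norm a + t^2 * (norm w)^2 / (2 * norm a)"
      using a0 t0 by (intro norm_add_quad_bound) auto
    also have "t * (a \<bullet> w) / norm a \<le> - t * sq"
    proof -
      have "a \<bullet> w \<le> - sq * norm a" unfolding a_def w_def sq_def d_def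
        using angle_bound[OF True] dr unfolding d_def w_def by simp
      then have "(a \<bullet> w) / norm a \<le> - sq" using a0 by (simp add: divide_le_eq)
      from mult_left_mono[OF this t0] show ?thesis by simp
    qed
    also have "t^2 * (norm w)^2 / (2 * norm a) \<le> t^2 * Q"
    proof -
      have "(norm w)^2 / (2 * norm a) \<le> Q" unfolding Q_def d_def[symmetric]
        using ad dr a0 by (intro divide_left_mono) (auto simp: d_def intro!: mult_pos_pos)
      then have "t^2 * ((norm w)^2 / (2 * norm a)) \<le> t^2 * Q" by (rule mult_left_mono) simp
      then show ?thesis by simp
    qed
    finally show ?thesis using True unfolding a_def by (simp add: algebra_simps)
  next
    case False
    have "norm (z + t *\<^sub>R w - v j) \<le> norm (z - v j) + norm (t *\<^sub>R w)"
      using norm_triangle_ineq[of "z - v j" "t *\<^sub>R w"] by (simp add: algebra_simps)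
    then show ?thesis using False t0 by (simp add: d_def)
  qed
  have Dpos: "real b * d < real g * sq"
  proof -
    have "C^2 * (real g^2 * (d^2 - r^2) - real b^2 * d^2) \<ge> real g^2 * (d^2 - C^2 * r^2)"
      using mult_right_mono[OF cnt[folded b_def g_def], of "d^2"] by (simp add: algebra_simps)
    moreover have "real g^2 * (d^2 - C^2 * r^2) > 0"
    proof -
      have "(C*r)^2 < d^2" using dC C1 r0 by (intro power_strict_mono) auto
      then have "d^2 - C^2 * r^2 > 0" by (simp add: power_mult_distrib)
      moreover have "real g^2 > 0" using gpos[folded g_def] by simp
      ultimately show ?thesis by simp
    qed
    ultimately have "C^2 * (real g^2 * (d^2 - r^2) - real b^2 * d^2) > 0" by linarith
    then have "real g^2 * (d^2 - r^2) - real b^2 * d^2 > 0" using C1 by (simp add: zero_less_mult_iff)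
    then have "real b^2 * d^2 < real g^2 * (d^2 - r^2)" by simp
    then have "(real b * d)^2 < (real g * sq)^2" unfolding sq_def using dr r0
      by (simp add: power_mult_distrib)
    moreover have "r^2 \<le> d^2" using dr r0 by (intro power_mono) auto
    then have "0 \<le> real g * sq" unfolding sq_def by simp
    with \<open>(real b * d)^2 < (real g * sq)^2\<close> show ?thesis by (rule power_less_imp_less_base)
  qed
  define D where "D = real g * sq - real b * d"
  have D0: "D > 0" using Dpos D_def by simp
  define t where "t = min 1 (D / (2 * real g * Q))"
  have g0: "real g > 0" using gpos g_def by simp
  have t0: "t > 0" unfolding t_def using D0 Q0 g0 by simp
  have tQ: "t * (real g * Q) \<le> D / 2"
  proof -
    have "t \<le> D / (2 * real g * Q)" unfolding t_def by simp
    then have "t * (real g * Q) \<le> D / (2 * real g * Q) * (real g * Q)" using g0 Q0 by (intro mult_right_mono) auto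
    also have "\<dots> = D / 2" using g0 Q0 by simp
    finally show ?thesis .
  qed
  have "(\<Sum>j<k. norm ((z + t *\<^sub>R w) - v j)) \<le> (\<Sum>j<k. norm (z - v j) + (if norm (v j - \<mu>) \<le> r then - t * sq + t^2 * Q else t * d))"
    using tm t0 by (intro sum_mono) auto
  also have "\<dots> = (\<Sum>j<k. norm (z - v j)) + (real g * (- t * sq + t^2 * Q) + real b * (t * d))"
    unfolding sum.distrib sum_if_count g_def b_def by simp
  also have "real g * (- t * sq + t^2 * Q) + real b * (t * d) = - t * D + t * (t * (real g * Q))"
    unfolding D_def by (simp add: algebra_simps power2_eq_square)
  also have "- t * D + t * (t * (real g * Q)) \<le> - t * D + t * (D / 2)"
  proof -
    have h: "t * (t * (real g * Q)) \<le> t * (D / 2)" by (rule mult_left_mono[OF tQ]) (use t0 in simp)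
    then show ?thesis by linarith
  qed
  finally have "(\<Sum>j<k. norm ((z + t *\<^sub>R w) - v j)) \<le> (\<Sum>j<k. norm (z - v j)) - t * D / 2" by (simp add: mult.commute)
  moreover have "t * D / 2 > 0" using t0 D0 by simp
  moreover have "(\<Sum>j<k. norm (z - v j)) \<le> (\<Sum>j<k. norm ((z + t *\<^sub>R w) - v j))"
    using med unfolding is_geometric_median_def by blast
  ultimately show False by linarith
qed

lemma (in prob_space) indep_vars_pair:
  assumes ind: "indep_vars (\<lambda>_. borel) X I" and "i \<in> I" "l \<in> I" "i \<noteq> l"
  shows "indep_var borel (X i) borel (X l)"
proof -
  have "indep_var (PiM {i} (\<lambda>_. borel)) (\<lambda>\<omega>. restrict (\<lambda>i. X i \<omega>) {i})
                  (PiM {l} (\<lambda>_. borel)) (\<lambda>\<omega>. restrict (\<lambda>i. X i \<omega>) {l})"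
    by (rule indep_var_restrict[OF ind]) (use assms in auto)
  then have "indep_var borel ((\<lambda>f. f i) \<circ> (\<lambda>\<omega>. restrict (\<lambda>i. X i \<omega>) {i}))
                       borel ((\<lambda>f. f l) \<circ> (\<lambda>\<omega>. restrict (\<lambda>i. X i \<omega>) {l}))"
    by (rule indep_var_compose) (auto intro: measurable_component_singleton)
  then show ?thesis by (simp add: comp_def)
qed

lemma (in prob_space) ident_transfer:
  fixes f :: "'d::topological_space \<Rightarrow> 'c::{banach, second_countable_topology}"
  assumes d: "distr M borel Y = distr M borel Z"
    and [measurable]: "Y \<in> borel_measurable M" "Z \<in> borel_measurable M" "f \<in> borel_measurable borel"
    and i: "integrable M (\<lambda>\<omega>. f (Z \<omega>))"
  shows "integrable M (\<lambda>\<omega>. f (Y \<omega>))" "expectation (\<lambda>\<omega>. f (Y \<omega>)) = expectation (\<lambda>\<omega>. f (Z \<omega>))"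
proof -
  have "integrable (distr M borel Z) f" using i by (subst integrable_distr_eq) auto
  then have "integrable (distr M borel Y) f" using d by simp
  then show "integrable M (\<lambda>\<omega>. f (Y \<omega>))" by (subst (asm) integrable_distr_eq) auto
  have "expectation (\<lambda>\<omega>. f (Y \<omega>)) = integral\<^sup>L (distr M borel Y) f" by (subst integral_distr) auto
  also have "\<dots> = integral\<^sup>L (distr M borel Z) f" using d by simp
  also have "\<dots> = expectation (\<lambda>\<omega>. f (Z \<omega>))" by (subst integral_distr) auto
  finally show "expectation (\<lambda>\<omega>. f (Y \<omega>)) = expectation (\<lambda>\<omega>. f (Z \<omega>))" .
qed

lemma (in prob_space) inner_integrable:
  fixes U V :: "'a \<Rightarrow> 'c::{real_inner, banach, second_countable_topology}"
  assumes [measurable]: "U \<in> borel_measurable M" "V \<in> borel_measurable M"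
    and iU2: "integrable M (\<lambda>\<omega>. (norm (U \<omega>))^2)" and iV2: "integrable M (\<lambda>\<omega>. (norm (V \<omega>))^2)"
  shows "integrable M (\<lambda>\<omega>. U \<omega> \<bullet> V \<omega>)"
proof (rule Bochner_Integration.integrable_bound[OF Bochner_Integration.integrable_add[OF iU2 iV2]])
  show "(\<lambda>\<omega>. U \<omega> \<bullet> V \<omega>) \<in> borel_measurable M" by measurable
  show "AE \<omega> in M. norm (U \<omega> \<bullet> V \<omega>) \<le> norm ((norm (U \<omega>))^2 + (norm (V \<omega>))^2)"
  proof (intro AE_I2)
    fix \<omega>
    have "norm (U \<omega> \<bullet> V \<omega>) \<le> norm (U \<omega>) * norm (V \<omega>)" using Cauchy_Schwarz_ineq2 by simp
    also have "\<dots> \<le> (norm (U \<omega>))^2 + (norm (V \<omega>))^2"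
    proof -
      have "0 \<le> (norm (U \<omega>) - norm (V \<omega>))^2" by simp
      then have "2 * (norm (U \<omega>) * norm (V \<omega>)) \<le> (norm (U \<omega>))^2 + (norm (V \<omega>))^2"
        unfolding power2_diff by linarith
      moreover have "0 \<le> norm (U \<omega>) * norm (V \<omega>)" by simp
      ultimately show ?thesis by linarith
    qed
    finally show "norm (U \<omega> \<bullet> V \<omega>) \<le> norm ((norm (U \<omega>))^2 + (norm (V \<omega>))^2)" by simp
  qed
qed

lemma (in prob_space) indep_inner_zero:
  fixes U V :: "'a \<Rightarrow> 'c::{real_inner, banach, second_countable_topology}"
  assumes ind: "indep_var borel U borel V"
    and iV: "integrable M V"
    and iU2: "integrable M (\<lambda>\<omega>. (norm (U \<omega>))^2)" and iV2: "integrable M (\<lambda>\<omega>. (norm (V \<omega>))^2)"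
    and EV: "expectation V = 0"
  shows "expectation (\<lambda>\<omega>. U \<omega> \<bullet> V \<omega>) = 0"
proof -
  have [measurable]: "U \<in> borel_measurable M" "V \<in> borel_measurable M"
    using ind by (auto dest: indep_var_rv1 indep_var_rv2)
  define P where "P = distr M borel U"
  define Q where "Q = distr M borel V"
  interpret P: prob_space P unfolding P_def by (rule prob_space_distr) measurable
  interpret Q: prob_space Q unfolding Q_def by (rule prob_space_distr) measurable
  interpret PQ: pair_sigma_finite P Q ..
  have joint: "distr M (borel \<Otimes>\<^sub>M borel) (\<lambda>\<omega>. (U \<omega>, V \<omega>)) = P \<Otimes>\<^sub>M Q"
    using ind unfolding indep_var_distribution_eq P_def Q_def by simp
  have iUV: "integrable M (\<lambda>\<omega>. U \<omega> \<bullet> V \<omega>)" by (rule inner_integrable) (use iU2 iV2 in auto)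
  have fm: "(\<lambda>p::'c \<times> 'c. fst p \<bullet> snd p) \<in> borel_measurable (borel \<Otimes>\<^sub>M borel)" by measurable
  have iPQ: "integrable (P \<Otimes>\<^sub>M Q) (\<lambda>(x, y). x \<bullet> y)"
  proof -
    have "integrable (distr M (borel \<Otimes>\<^sub>M borel) (\<lambda>\<omega>. (U \<omega>, V \<omega>))) (\<lambda>p. fst p \<bullet> snd p)"
      using iUV fm by (subst integrable_distr_eq) auto
    then show ?thesis unfolding joint by (simp add: case_prod_beta')
  qed
  have "expectation (\<lambda>\<omega>. U \<omega> \<bullet> V \<omega>) = integral\<^sup>L (distr M (borel \<Otimes>\<^sub>M borel) (\<lambda>\<omega>. (U \<omega>, V \<omega>))) (\<lambda>p. fst p \<bullet> snd p)"
    using fm by (subst integral_distr) auto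
  also have "\<dots> = integral\<^sup>L (P \<Otimes>\<^sub>M Q) (\<lambda>(x, y). x \<bullet> y)" unfolding joint by (simp add: case_prod_beta')
  also have "\<dots> = (\<integral>x. (\<integral>y. x \<bullet> y \<partial>Q) \<partial>P)" by (rule PQ.integral_fst[OF iPQ, symmetric])
  also have "\<dots> = (\<integral>x. x \<bullet> integral\<^sup>L Q (\<lambda>y. y) \<partial>P)"
  proof -
    have "integrable Q (\<lambda>y. y)" unfolding Q_def using iV by (subst integrable_distr_eq) auto
    then show ?thesis by simp
  qed
  also have "integral\<^sup>L Q (\<lambda>y. y) = 0" unfolding Q_def using EV by (subst integral_distr) auto
  finally show ?thesis by simp
qed

lemma (in prob_space) sum_sq_indep:
  fixes U :: "nat \<Rightarrow> 'a \<Rightarrow> 'c::{real_inner, banach, second_countable_topology}"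
  assumes fin: "finite S"
    and iU: "\<And>i. i \<in> S \<Longrightarrow> integrable M (U i)"
    and iU2: "\<And>i. i \<in> S \<Longrightarrow> integrable M (\<lambda>\<omega>. (norm (U i \<omega>))^2)"
    and E0: "\<And>i. i \<in> S \<Longrightarrow> expectation (U i) = 0"
    and Es: "\<And>i. i \<in> S \<Longrightarrow> expectation (\<lambda>\<omega>. (norm (U i \<omega>))^2) = s"
    and ind: "\<And>i l. i \<in> S \<Longrightarrow> l \<in> S \<Longrightarrow> i \<noteq> l \<Longrightarrow> indep_var borel (U i) borel (U l)"
  shows "integrable M (\<lambda>\<omega>. (norm (\<Sum>i\<in>S. U i \<omega>))^2)"
    and "expectation (\<lambda>\<omega>. (norm (\<Sum>i\<in>S. U i \<omega>))^2) = real (card S) * s"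
proof -
  have m[measurable]: "U i \<in> borel_measurable M" if "i \<in> S" for i using iU[OF that] by auto
  have eq: "(norm (\<Sum>i\<in>S. U i \<omega>))^2 = (\<Sum>i\<in>S. \<Sum>l\<in>S. U i \<omega> \<bullet> U l \<omega>)" for \<omega>
    by (simp add: power2_norm_eq_inner inner_sum_left inner_sum_right inner_commute)
  have it: "integrable M (\<lambda>\<omega>. U i \<omega> \<bullet> U l \<omega>)" if "i \<in> S" "l \<in> S" for i l
    using that by (intro inner_integrable m iU2)
  have et: "expectation (\<lambda>\<omega>. U i \<omega> \<bullet> U l \<omega>) = (if i = l then s else 0)" if "i \<in> S" "l \<in> S" for i l
  proof (cases "i = l")
    case True
    then show ?thesis using Es[OF that(1)] by (simp add: power2_norm_eq_inner)
  next
    case False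
    then show ?thesis using that
      by (simp add: indep_inner_zero[OF ind[OF that False] iU[OF that(2)] iU2[OF that(1)] iU2[OF that(2)] E0[OF that(2)]])
  qed
  show "integrable M (\<lambda>\<omega>. (norm (\<Sum>i\<in>S. U i \<omega>))^2)"
    unfolding eq by (intro Bochner_Integration.integrable_sum it) auto
  have "expectation (\<lambda>\<omega>. (norm (\<Sum>i\<in>S. U i \<omega>))^2) = (\<Sum>i\<in>S. \<Sum>l\<in>S. expectation (\<lambda>\<omega>. U i \<omega> \<bullet> U l \<omega>))"
    unfolding eq
    by (subst Bochner_Integration.integral_sum, (intro Bochner_Integration.integrable_sum it; auto))
       (intro sum.cong refl Bochner_Integration.integral_sum; intro it; auto)
  also have "\<dots> = (\<Sum>i\<in>S. \<Sum>l\<in>S. (if i = l then s else 0))"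
    by (intro sum.cong refl et) auto
  also have "\<dots> = real (card S) * s" using fin by simp
  finally show "expectation (\<lambda>\<omega>. (norm (\<Sum>i\<in>S. U i \<omega>))^2) = real (card S) * s" .
qed

lemma (in prob_space) chernoff_count:
  fixes Z :: "nat \<Rightarrow> 'a \<Rightarrow> real" and k :: nat
  assumes ind: "indep_vars (\<lambda>_. borel) Z {..<k}"
    and z01: "\<And>j \<omega>. j < k \<Longrightarrow> \<omega> \<in> space M \<Longrightarrow> Z j \<omega> = 0 \<or> Z j \<omega> = 1"
    and EZ: "\<And>j. j < k \<Longrightarrow> expectation (Z j) \<le> 1/10"
  shows "prob {\<omega>\<in>space M. 7/18 * real k \<le> (\<Sum>j<k. Z j \<omega>)} \<le> (81/55)^k / (63/11) powr (7/18 * real k)"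
proof -
  have Zm[measurable]: "Z j \<in> borel_measurable M" if "j < k" for j
    using ind that by (auto simp: indep_vars_def)
  define Y where "Y j \<omega> = 1 + 52/11 * Z j \<omega>" for j \<omega>
  have Ym[measurable]: "Y j \<in> borel_measurable M" if "j < k" for j unfolding Y_def using that by measurable
  have indY: "indep_vars (\<lambda>_. borel) Y {..<k}"
    unfolding Y_def by (rule indep_vars_compose2[OF ind]) measurable
  have iZ: "integrable M (Z j)" if "j < k" for j
    by (rule integrable_const_bound[where B=1]) (use that in \<open>auto intro!: AE_I2 dest: z01[of j]\<close>)
  have iY: "integrable M (Y j)" if "j < k" for j unfolding Y_def using iZ[OF that] by simp
  have EY: "expectation (Y j) = 1 + 52/11 * expectation (Z j)" if "j < k" for j
    unfolding Y_def using iZ[OF that] by (simp add: prob_space)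
  have Y0: "0 \<le> Y j \<omega>" if "j < k" "\<omega> \<in> space M" for j \<omega> unfolding Y_def using z01[OF that] by auto
  have EYb: "0 \<le> expectation (Y j) \<and> expectation (Y j) \<le> 81/55" if "j < k" for j
  proof
    show "0 \<le> expectation (Y j)" using Y0 that by (intro integral_nonneg_AE AE_I2) auto
    show "expectation (Y j) \<le> 81/55" unfolding EY[OF that] using EZ[OF that] by simp
  qed
  have Eprod: "expectation (\<lambda>\<omega>. \<Prod>j<k. Y j \<omega>) = (\<Prod>j<k. expectation (Y j))"
    by (rule indep_vars_lebesgue_integral) (use indY iY in auto)
  have iprod: "integrable M (\<lambda>\<omega>. \<Prod>j<k. Y j \<omega>)"
    by (rule indep_vars_integrable) (use indY iY in auto)
  have Eb: "expectation (\<lambda>\<omega>. \<Prod>j<k. Y j \<omega>) \<le> (81/55)^k"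
    unfolding Eprod using prod_mono[of "{..<k}" "\<lambda>j. expectation (Y j)" "\<lambda>_. 81/55"] EYb by simp
  have Ypow: "Y j \<omega> = (63/11) powr (Z j \<omega>)" if "j < k" "\<omega> \<in> space M" for j \<omega>
    using z01[OF that] unfolding Y_def by auto
  have prodpow: "(\<Prod>j<k. Y j \<omega>) = (63/11) powr (\<Sum>j<k. Z j \<omega>)" if "\<omega> \<in> space M" for \<omega>
    using that by (simp add: powr_sum Ypow)
  define c where "c = (63/11::real) powr (7/18 * real k)"
  have c0: "c > 0" unfolding c_def by simp
  have "prob {\<omega>\<in>space M. 7/18 * real k \<le> (\<Sum>j<k. Z j \<omega>)} \<le> prob {\<omega>\<in>space M. c \<le> (\<Prod>j<k. Y j \<omega>)}"
  proof (rule finite_measure_mono)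
    show "{\<omega>\<in>space M. c \<le> (\<Prod>j<k. Y j \<omega>)} \<in> events" by measurable
    show "{\<omega>\<in>space M. 7/18 * real k \<le> (\<Sum>j<k. Z j \<omega>)} \<subseteq> {\<omega>\<in>space M. c \<le> (\<Prod>j<k. Y j \<omega>)}"
      unfolding c_def using prodpow by (auto intro: powr_mono)
  qed
  also have "\<dots> \<le> expectation (\<lambda>\<omega>. \<Prod>j<k. Y j \<omega>) / c"
    by (rule integral_Markov_inequality_measure[OF iprod, where A="space M"])
       (use c0 Y0 in \<open>auto intro!: AE_I2 prod_nonneg\<close>)
  also have "\<dots> \<le> (81/55)^k / c" using Eb c0 by (simp add: divide_right_mono)
  finally show ?thesis unfolding c_def .
qed

lemma psi_val: "psi (7/18) (1/10) = 7/18 * ln (35/9) - 11/18 * ln (81/55)"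
proof -
  have "psi (7/18) (1/10) = 11/18 * ln (55/81) + 7/18 * ln (35/9)" unfolding psi_def by simp
  also have "ln (55/81::real) = - ln (81/55)" by (simp add: ln_div)
  finally show ?thesis by simp
qed

lemma ln_26_25: "1/26 \<le> ln (26/25::real)" "ln (26/25::real) \<le> 1/25"
proof -
  have "ln (25/26::real) \<le> 25/26 - 1" by (rule ln_le_minus_one) simp
  moreover have "ln (25/26::real) = - ln (26/25)" by (simp add: ln_div)
  ultimately show "1/26 \<le> ln (26/25::real)" by simp
  show "ln (26/25::real) \<le> 1/25" using ln_le_minus_one[of "26/25::real"] by simp
qed

lemma psi_lower: "1/3.85 \<le> psi (7/18) (1/10)"
proof -
  have a: "34/26 \<le> ln (35/9::real)"
  proof -
    have "34/26 \<le> 34 * ln (26/25::real)" using ln_26_25(1) by simp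
    also have "34 * ln (26/25::real) = ln ((26/25)^34)" by (simp add: ln_realpow)
    also have "\<dots> \<le> ln (35/9)" by (subst ln_le_cancel_iff) (simp_all add: power_divide)
    finally show ?thesis .
  qed
  have b: "ln (81/55::real) \<le> 10/25"
  proof -
    have "ln (81/55::real) \<le> ln ((26/25)^10)" by (subst ln_le_cancel_iff) (simp_all add: power_divide)
    also have "\<dots> = 10 * ln (26/25)" by (simp add: ln_realpow)
    also have "\<dots> \<le> 10/25" using ln_26_25(2) by simp
    finally show ?thesis .
  qed
  show ?thesis unfolding psi_val using a b by simp
qed

lemma ln_14_lower: "2/7 \<le> ln (1.4::real)"
proof -
  have "ln (5/7::real) \<le> 5/7 - 1" by (rule ln_le_minus_one) simp
  moreover have "ln (5/7::real) = - ln (1.4)" by (simp add: ln_div)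
  ultimately show ?thesis by simp
qed

lemma chernoff_value:
  "(81/55::real)^k / (63/11) powr (7/18 * real k) = exp (- real k * psi (7/18) (1/10))"
proof -
  have "(81/55::real)^k = exp (real k * ln (81/55))" by (simp add: exp_of_nat_mult)
  moreover have "(63/11::real) powr (7/18 * real k) = exp (7/18 * real k * ln (63/11))"
    by (simp add: powr_def)
  moreover have "ln (63/11::real) = ln (35/9) + ln (81/55)"
  proof -
    have "ln (63/11::real) = ln ((35/9) * (81/55))" by simp
    also have "\<dots> = ln (35/9) + ln (81/55)" by (rule ln_mult_pos) simp_all
    finally show ?thesis .
  qed
  ultimately show ?thesis unfolding psi_val by (simp add: exp_diff[symmetric] algebra_simps)
qed

lemma mean_shift:
  fixes x :: "nat \<Rightarrow> 'a::real_vector"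
  assumes "finite S" "card S = m" "m > 0"
  shows "(1 / real m) *\<^sub>R (\<Sum>l\<in>S. x l) - \<mu> = (1 / real m) *\<^sub>R (\<Sum>l\<in>S. (x l - \<mu>))"
proof -
  have "(\<Sum>l\<in>S. (x l - \<mu>)) = (\<Sum>l\<in>S. x l) - real m *\<^sub>R \<mu>" using assms by (simp add: sum_subtractf sum_constant_scaleR)
  then show ?thesis using assms by (simp add: scaleR_diff_right)
qed

lemma real_shift:
  fixes y :: "nat \<Rightarrow> real"
  assumes "finite S" "card S = m" "m > 0"
  shows "(1 / real m) * (\<Sum>l\<in>S. y l) - c = (1 / real m) * (\<Sum>l\<in>S. (y l - c))"
proof -
  have "(\<Sum>l\<in>S. (y l - c)) = (\<Sum>l\<in>S. y l) - real m * c" using assms by (simp add: sum_subtractf)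
  then show ?thesis using assms by (simp add: field_simps)
qed

lemma var_identity:
  fixes x :: "nat \<Rightarrow> 'a::real_inner"
  assumes fin: "finite S" and c: "card S = m" and m0: "m > 0"
  shows "(1 / real m) * (\<Sum>i\<in>S. (norm (x i - (1 / real m) *\<^sub>R (\<Sum>l\<in>S. x l)))^2)
       = (1 / real m) * (\<Sum>i\<in>S. (norm (x i - \<mu>))^2) - (norm ((1 / real m) *\<^sub>R (\<Sum>l\<in>S. x l) - \<mu>))^2"
proof -
  define e where "e = (1 / real m) *\<^sub>R (\<Sum>l\<in>S. x l) - \<mu>"
  have e': "e = (1 / real m) *\<^sub>R (\<Sum>l\<in>S. (x l - \<mu>))" unfolding e_def by (rule mean_shift[OF assms])
  have se: "(\<Sum>l\<in>S. (x l - \<mu>)) = real m *\<^sub>R e" using m0 unfolding e' by simp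
  have t: "(norm (x i - (1 / real m) *\<^sub>R (\<Sum>l\<in>S. x l)))^2 = (norm (x i - \<mu>))^2 - 2 * ((x i - \<mu>) \<bullet> e) + (norm e)^2" for i
  proof -
    have "x i - (1 / real m) *\<^sub>R (\<Sum>l\<in>S. x l) = (x i - \<mu>) - e" unfolding e_def by simp
    moreover have "(norm ((x i - \<mu>) - e))^2 = (norm (x i - \<mu>))^2 - 2 * ((x i - \<mu>) \<bullet> e) + (norm e)^2"
      by (simp only: power2_norm_eq_inner inner_diff_left inner_diff_right inner_commute[of e "x i"] inner_commute[of e \<mu>]) simp
    ultimately show ?thesis by (simp only:)
  qed
  have "(\<Sum>i\<in>S. (norm (x i - (1 / real m) *\<^sub>R (\<Sum>l\<in>S. x l)))^2)
      = (\<Sum>i\<in>S. (norm (x i - \<mu>))^2) - 2 * (\<Sum>i\<in>S. ((x i - \<mu>) \<bullet> e)) + real m * (norm e)^2"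
    unfolding t using fin c by (simp add: sum.distrib sum_subtractf sum_distrib_left)
  also have "(\<Sum>i\<in>S. ((x i - \<mu>) \<bullet> e)) = (\<Sum>i\<in>S. (x i - \<mu>)) \<bullet> e"
    by (simp only: inner_sum_left)
  also have "(\<Sum>i\<in>S. (x i - \<mu>)) \<bullet> e = real m * (norm e)^2" unfolding se by (simp add: power2_norm_eq_inner)
  finally show ?thesis using m0 unfolding e_def[symmetric] by (simp add: field_simps)
qed

lemma sq_le_one_plus_4: "(t::real)^2 \<le> 1 + t^4"
proof -
  have "0 \<le> (t^2 - 1)^2" by simp
  then have "2 * t^2 \<le> 1 + t^4" by (simp add: power2_diff power_mult[symmetric] algebra_simps) 
  moreover have "0 \<le> t^2" by simp
  ultimately show ?thesis by linarith
qed

lemma num_facts: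
  assumes d: "0 < \<delta>" "\<delta> < (1::real)"
  shows "1 \<le> num_groups \<delta>" "0 < ln (1.4 / \<delta>)"
    "real (num_groups \<delta>) \<le> (385/100) * ln (1.4 / \<delta>)"
    "exp (- real (num_groups \<delta>) * psi (7/18) (1/10)) < \<delta>"
proof -
  define p where "p = psi (7/18) (1/10)"
  have p0: "p > 0" "1/(385/100) \<le> p" using psi_lower unfolding p_def by auto
  define x0 where "x0 = ln (1/\<delta>) / p"
  have lnd: "0 \<le> ln (1/\<delta>)" using d by simp
  have x0nn: "0 \<le> x0" unfolding x0_def using lnd p0 by simp
  have kdef: "real (num_groups \<delta>) = real (nat \<lfloor>x0\<rfloor>) + 1" unfolding num_groups_def x0_def p_def by simp
  have fl: "real (nat \<lfloor>x0\<rfloor>) = of_int \<lfloor>x0\<rfloor>" using x0nn by simp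
  have kx: "x0 < real (num_groups \<delta>)" "real (num_groups \<delta>) \<le> x0 + 1"
    unfolding kdef fl by linarith+
  show "1 \<le> num_groups \<delta>" unfolding num_groups_def by simp
  have Ls: "ln (1.4 / \<delta>) = ln 1.4 + ln (1/\<delta>)"
  proof -
    have "ln (1.4 / \<delta>) = ln (1.4 * (1/\<delta>))" by simp
    also have "\<dots> = ln 1.4 + ln (1/\<delta>)" by (rule ln_mult_pos) (use d in auto)
    finally show ?thesis .
  qed
  show "0 < ln (1.4 / \<delta>)" unfolding Ls using ln_14_lower lnd by linarith
  have "x0 \<le> (385/100) * ln (1/\<delta>)"
  proof -
    have "x0 = ln (1/\<delta>) * (1/p)" unfolding x0_def by simp
    also have "\<dots> \<le> ln (1/\<delta>) * (385/100)"
      using p0 lnd by (intro mult_left_mono) (auto simp: field_simps)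
    finally show ?thesis by simp
  qed
  moreover have "1 \<le> (385/100) * ln (1.4::real)" using ln_14_lower by linarith
  moreover have "(385/100) * ln (1.4 / \<delta>) = (385/100) * ln 1.4 + (385/100) * ln (1/\<delta>)" unfolding Ls by (rule distrib_left)
  ultimately show "real (num_groups \<delta>) \<le> (385/100) * ln (1.4 / \<delta>)" using kx by linarith
  have "ln (1/\<delta>) < real (num_groups \<delta>) * p" using kx(1) p0 unfolding x0_def by (simp add: divide_less_eq)
  then have "exp (- (real (num_groups \<delta>) * p)) < exp (- ln (1/\<delta>))" by simp
  also have "exp (- ln (1/\<delta>)) = \<delta>" using d by (simp add: ln_div)
  finally show "exp (- real (num_groups \<delta>) * psi (7/18) (1/10)) < \<delta>" unfolding p_def by simp
qed

lemma cond_facts: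
  fixes n :: nat and L s v :: real
  assumes L: "0 < L" and s: "0 < s" and n: "0 < n" and v0: "0 \<le> v"
    and c: "15.2 * sqrt (v / s^2) \<le> (1/2 - 178 * L / real n) * sqrt (real n / L)"
  shows "356 * L \<le> real n" "(92416/100) * L * v \<le> real n * s^2"
proof -
  have sq0: "0 < sqrt (real n / L)" using L n by simp
  have l0: "0 \<le> 15.2 * sqrt (v / s^2)" using v0 by simp
  have h1: "0 \<le> 1/2 - 178 * L / real n"
  proof (rule ccontr)
    assume "\<not> ?thesis"
    then have "(1/2 - 178 * L / real n) * sqrt (real n / L) < 0" using sq0 by (simp add: mult_neg_pos)
    then show False using c l0 by linarith
  qed
  then show "356 * L \<le> real n" using n by (simp add: field_simps)
  have h2: "15.2 * sqrt (v / s^2) \<le> 1/2 * sqrt (real n / L)"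
  proof -
    have "(1/2 - 178 * L / real n) * sqrt (real n / L) \<le> 1/2 * sqrt (real n / L)"
      using L n sq0 by (intro mult_right_mono) auto
    then show ?thesis using c by linarith
  qed
  show "(92416/100) * L * v \<le> real n * s^2"
  proof (cases "v \<le> 0")
    case True
    have "(92416/100) * L * v \<le> 0" using True L by (simp add: mult_nonneg_nonpos)
    also have "0 \<le> real n * s^2" by simp
    finally show ?thesis .
  next
    case False
    have vs: "0 \<le> v / s^2" using False by (intro divide_nonneg_nonneg) auto
    have A: "(15.2 * sqrt (v / s^2))^2 \<le> (1/2 * sqrt (real n / L))^2"
      by (rule power_mono[OF h2]) (use vs in simp)
    have e1: "(15.2 * sqrt (v / s^2))^2 = 15.2^2 * (v / s^2)"
      using vs by (simp only: power_mult_distrib real_sqrt_pow2)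
    have nL: "0 \<le> real n / L" using L by simp
    have e2: "(1/2 * sqrt (real n / L))^2 = (1/2)^2 * (real n / L)"
      using nL by (simp only: power_mult_distrib real_sqrt_pow2)
    have "15.2^2 * (v / s^2) \<le> (1/2)^2 * (real n / L)" using A unfolding e1 e2 .
    then have "(23104/100) * v / s^2 \<le> real n / (4 * L)" by (simp add: power_divide)
    then show ?thesis using L s by (simp add: field_simps)
  qed
qed

lemma q2_fact:
  fixes m n :: nat and L s v :: real
  assumes L: "0 < L" and s: "0 < s" and m: "92 \<le> m"
    and v: "(92416/100) * L * v \<le> real n * s^2" and nm: "real n \<le> (385/100) * (real m + 1) * L"
  shows "v \<le> 1/25 * ((33/100) * s)^2 * real m"
proof -
  have m0: "(92::real) \<le> real m" using m by simp
  have "real n * s^2 \<le> (385/100) * (real m + 1) * L * s^2" by (rule mult_right_mono[OF nm]) simp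
  also have "(385/100) * (real m + 1) * L * s^2 \<le> (385/100) * (93/92 * real m) * L * s^2"
    using m0 L by (intro mult_right_mono) auto
  finally have "(92416/100) * L * v \<le> (385/100) * (93/92 * real m) * L * s^2" using v by linarith
  then have "(92416/100) * v \<le> (385/100) * (93/92 * real m) * s^2" using L by (simp add: algebra_simps)
  then have "v \<le> ((385/100) * 93 / 92 / (92416/100)) * (real m * s^2)" by (simp add: field_simps)
  also have "\<dots> \<le> (1/25 * (33/100)^2) * (real m * s^2)" by (intro mult_right_mono) (auto simp: power_divide)
  finally show ?thesis by (simp add: power_mult_distrib power_divide algebra_simps)
qed

lemma radius_fact:
  fixes m n :: nat and L s T :: real
  assumes L: "0 < L" and s: "0 < s" and m: "92 \<le> m" and n: "0 < n"
    and nm: "real n \<le> (385/100) * (real m + 1) * L"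
    and T: "((67/100) - 1 / ((6/100) * real m)) * s \<le> T"
  shows "(13/10) * sqrt (s / ((6/100) * real m)) \<le> 11 * sqrt 2 * sqrt (T * L / real n)"
proof -
  have m0: "(92::real) \<le> real m" using m by simp
  have key: "(169/100) * real n \<le> 242 * ((402/10000) * real m - 1) * L"
  proof -
    have "(169/100) * real n \<le> (169/100) * ((385/100) * (real m + 1) * L)" by (rule mult_left_mono[OF nm]) simp
    also have "\<dots> \<le> 242 * ((402/10000) * real m - 1) * L"
    proof -
      have "(169/100) * ((385/100) * (real m + 1)) \<le> 242 * ((402/10000) * real m - 1)" using m0 by simp
      then show ?thesis using L by (metis mult.assoc mult_right_mono less_imp_le)
    qed
    finally show ?thesis .
  qed
  have Tlow: "((67/100) - 1 / ((6/100) * real m)) * s * L / real n \<le> T * L / real n"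
    using T L n by (intro divide_right_mono mult_right_mono) auto
  have TL0: "0 \<le> T * L / real n"
  proof -
    have "0 \<le> ((67/100) - 1 / ((6/100) * real m)) * s * L / real n"
    proof -
      have "1 / ((6/100) * real m) \<le> 1 / ((6/100) * 92)" using m0 by (intro divide_left_mono) auto
      then have "0 \<le> (67/100) - 1 / ((6/100) * real m)" by simp
      then show ?thesis using s L n by simp
    qed
    then show ?thesis using Tlow by linarith
  qed
  have "((13/10) * sqrt (s / ((6/100) * real m)))^2 = (169/100) * (s / ((6/100) * real m))"
  proof -
    define x where "x = s / ((6/100) * real m)"
    have "0 \<le> x" unfolding x_def using s m0 by simp
    then have "((13/10) * sqrt x)^2 = (169/100) * x" by (simp add: power_mult_distrib power_divide)
    then show ?thesis unfolding x_def .
  qed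
  also have "\<dots> \<le> 242 * (((67/100) - 1 / ((6/100) * real m)) * s * L / real n)"
  proof -
    have "(169/100) * (s / ((6/100) * real m)) = s * ((169/100) * real n) / ((6/100) * real m * real n)"
      using m0 n by (simp add: field_simps)
    also have "\<dots> \<le> s * (242 * ((402/10000) * real m - 1) * L) / ((6/100) * real m * real n)"
      using key s m0 n by (intro divide_right_mono mult_left_mono) auto
    also have "\<dots> = 242 * (((67/100) - 1 / ((6/100) * real m)) * s * L / real n)"
      using m0 n by (simp add: field_simps)
    finally show ?thesis .
  qed
  also have "\<dots> \<le> 242 * (T * L / real n)" using Tlow by simp
  also have "\<dots> = (11 * sqrt 2 * sqrt (T * L / real n))^2"
  proof -
    have "0 \<le> T * L / real n"
    proof -
      have "0 \<le> ((67/100) - 1 / ((6/100) * real m)) * s * L / real n"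
      proof -
        have "1 / ((6/100) * real m) \<le> 1 / ((6/100) * 92)" using m0 by (intro divide_left_mono) auto
        then have "0 \<le> (67/100) - 1 / ((6/100) * real m)" by simp
        then show ?thesis using s L n by simp
      qed
      then show ?thesis using Tlow by linarith
    qed
    then show ?thesis by (simp add: power_mult_distrib)
  qed
  finally have "((13/10) * sqrt (s / ((6/100) * real m)))^2 \<le> (11 * sqrt 2 * sqrt (T * L / real n))^2" .
  then show ?thesis by (rule power2_le_imp_le) (use TL0 in simp)
qed

lemma (in prob_space) block_indep:
  fixes X :: "nat \<Rightarrow> 'a \<Rightarrow> 'c::topological_space"
  assumes ind: "indep_vars (\<lambda>_. borel) X I" and sub: "\<And>j. j < k \<Longrightarrow> G j \<subseteq> I"
    and disj: "disjoint_family_on G {..<k}"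
    and \<Phi>m: "\<And>j. j < k \<Longrightarrow> \<Phi> j \<in> borel_measurable (PiM (G j) (\<lambda>_. borel))"
  shows "indep_vars (\<lambda>_. borel) (\<lambda>j \<omega>. \<Phi> j (restrict (\<lambda>i. X i \<omega>) (G j))) {..<k}"
proof -
  have "indep_vars (\<lambda>j. PiM (G j) (\<lambda>_. borel)) (\<lambda>j \<omega>. restrict (\<lambda>i. X i \<omega>) (G j)) {..<k}"
    by (rule indep_vars_restrict[OF ind]) (use sub disj in auto)
  then show ?thesis by (rule indep_vars_compose2) (use \<Phi>m in auto)
qed

lemma (in prob_space) moments0:
  fixes X0 :: "'a \<Rightarrow> 'c::{real_inner, banach, second_countable_topology}"
  assumes [measurable]: "X0 \<in> borel_measurable M" and int1: "integrable M X0"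
    and mean: "expectation X0 = \<mu>" and int4: "integrable M (\<lambda>\<omega>. norm (X0 \<omega> - \<mu>) ^ 4)"
  shows "integrable M (\<lambda>\<omega>. X0 \<omega> - \<mu>)" "expectation (\<lambda>\<omega>. X0 \<omega> - \<mu>) = 0"
    "integrable M (\<lambda>\<omega>. norm (X0 \<omega> - \<mu>) ^ 2)"
    "integrable M (\<lambda>\<omega>. norm (X0 \<omega> - \<mu>) ^ 2 - expectation (\<lambda>\<omega>. norm (X0 \<omega> - \<mu>) ^ 2))"
    "expectation (\<lambda>\<omega>. norm (X0 \<omega> - \<mu>) ^ 2 - expectation (\<lambda>\<omega>. norm (X0 \<omega> - \<mu>) ^ 2)) = 0"
    "integrable M (\<lambda>\<omega>. (norm (X0 \<omega> - \<mu>) ^ 2 - expectation (\<lambda>\<omega>. norm (X0 \<omega> - \<mu>) ^ 2))^2)"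
    "expectation (\<lambda>\<omega>. (norm (X0 \<omega> - \<mu>) ^ 2 - expectation (\<lambda>\<omega>. norm (X0 \<omega> - \<mu>) ^ 2))^2)
       = expectation (\<lambda>\<omega>. norm (X0 \<omega> - \<mu>) ^ 4) - (expectation (\<lambda>\<omega>. norm (X0 \<omega> - \<mu>) ^ 2))^2"
proof -
  define s where "s = expectation (\<lambda>\<omega>. norm (X0 \<omega> - \<mu>) ^ 2)"
  show i1: "integrable M (\<lambda>\<omega>. X0 \<omega> - \<mu>)" using int1 by simp
  show "expectation (\<lambda>\<omega>. X0 \<omega> - \<mu>) = 0" using int1 mean by (simp add: prob_space)
  show i2: "integrable M (\<lambda>\<omega>. norm (X0 \<omega> - \<mu>) ^ 2)"
  proof (rule Bochner_Integration.integrable_bound[OF Bochner_Integration.integrable_add[OF integrable_const[of 1] int4]])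
    show "(\<lambda>\<omega>. norm (X0 \<omega> - \<mu>) ^ 2) \<in> borel_measurable M" by measurable
    show "AE \<omega> in M. norm (norm (X0 \<omega> - \<mu>) ^ 2) \<le> norm (1 + norm (X0 \<omega> - \<mu>) ^ 4)"
      using sq_le_one_plus_4 by (intro AE_I2) simp
  qed
  show i3: "integrable M (\<lambda>\<omega>. norm (X0 \<omega> - \<mu>) ^ 2 - expectation (\<lambda>\<omega>. norm (X0 \<omega> - \<mu>) ^ 2))"
    using i2 by simp
  show "expectation (\<lambda>\<omega>. norm (X0 \<omega> - \<mu>) ^ 2 - expectation (\<lambda>\<omega>. norm (X0 \<omega> - \<mu>) ^ 2)) = 0"
    using i2 by (simp add: prob_space)
  have eq: "(norm (X0 \<omega> - \<mu>) ^ 2 - s)^2 = norm (X0 \<omega> - \<mu>) ^ 4 - 2 * s * norm (X0 \<omega> - \<mu>) ^ 2 + s^2" for \<omega>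
    by (simp add: power2_diff power_mult[symmetric] algebra_simps)
  have i4: "integrable M (\<lambda>\<omega>. norm (X0 \<omega> - \<mu>) ^ 4 - 2 * s * norm (X0 \<omega> - \<mu>) ^ 2 + s^2)"
    using i2 int4 by simp
  then show "integrable M (\<lambda>\<omega>. (norm (X0 \<omega> - \<mu>) ^ 2 - expectation (\<lambda>\<omega>. norm (X0 \<omega> - \<mu>) ^ 2))^2)"
    unfolding s_def[symmetric] eq .
  have "expectation (\<lambda>\<omega>. (norm (X0 \<omega> - \<mu>) ^ 2 - s)^2)
      = expectation (\<lambda>\<omega>. norm (X0 \<omega> - \<mu>) ^ 4) - 2 * s * s + s^2"
    unfolding eq using i2 int4 by (simp add: prob_space s_def)
  then show "expectation (\<lambda>\<omega>. (norm (X0 \<omega> - \<mu>) ^ 2 - expectation (\<lambda>\<omega>. norm (X0 \<omega> - \<mu>) ^ 2))^2)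
       = expectation (\<lambda>\<omega>. norm (X0 \<omega> - \<mu>) ^ 4) - (expectation (\<lambda>\<omega>. norm (X0 \<omega> - \<mu>) ^ 2))^2"
    unfolding s_def[symmetric] by (simp add: power2_eq_square)
qed

lemma (in prob_space) group_bad:
  fixes X :: "nat \<Rightarrow> 'a \<Rightarrow> 'c::{real_inner, banach, second_countable_topology}"
  assumes ind: "indep_vars (\<lambda>_. borel) X {..<n}"
    and rv: "\<And>i. i < n \<Longrightarrow> X i \<in> borel_measurable M"
    and ident: "\<And>i. i < n \<Longrightarrow> distr M borel (X i) = distr M borel (X 0)"
    and int1: "integrable M (X 0)" and mean: "expectation (X 0) = \<mu>"
    and int4: "integrable M (\<lambda>\<omega>. norm (X 0 \<omega> - \<mu>) ^ 4)"
    and S: "finite S" "S \<subseteq> {..<n}" "card S = m" "0 < m"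
    and s_def: "s = expectation (\<lambda>\<omega>. norm (X 0 \<omega> - \<mu>) ^ 2)"
    and s0: "0 < s"
    and vb: "expectation (\<lambda>\<omega>. norm (X 0 \<omega> - \<mu>) ^ 4) - s^2 \<le> 1/25 * ((33/100) * s)^2 * real m"
  shows "prob {\<omega>\<in>space M. s / ((6/100) * real m) \<le> (norm ((1 / real (card S)) *\<^sub>R (\<Sum>i\<in>S. X i \<omega>) - \<mu>))^2
            \<or> ((33/100) * s)^2 \<le> ((1 / real m) * (\<Sum>i\<in>S. (norm (X i \<omega> - \<mu>))^2) - s)^2} \<le> 1/10"
proof -
  have X0m[measurable]: "X 0 \<in> borel_measurable M" using int1 by auto
  have Xm[measurable]: "X i \<in> borel_measurable M" if "i \<in> S" for i using rv S(2) that by auto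
  note mo = moments0[OF X0m int1 mean int4, folded s_def]
  have tr: "integrable M (\<lambda>\<omega>. f (X i \<omega>)) \<and> expectation (\<lambda>\<omega>. f (X i \<omega>)) = expectation (\<lambda>\<omega>. f (X 0 \<omega>))"
    if "i \<in> S" "f \<in> borel_measurable borel" "integrable M (\<lambda>\<omega>. f (X 0 \<omega>))"
    for i and f :: "'c \<Rightarrow> 'd::{banach, second_countable_topology}"
    using ident_transfer[OF ident[of i] Xm[OF that(1)] X0m that(2) that(3)] that(1) S(2) by auto
  define U where "U i \<omega> = X i \<omega> - \<mu>" for i \<omega>
  define V where "V i \<omega> = norm (X i \<omega> - \<mu>) ^ 2 - s" for i \<omega>
  have indp: "indep_var borel (X i) borel (X l)" if "i \<in> S" "l \<in> S" "i \<noteq> l" for i l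
    using indep_vars_pair[OF ind] that S(2) by auto
  have EU: "expectation (\<lambda>\<omega>. (norm (\<Sum>i\<in>S. U i \<omega>))^2) = real (card S) * s"
  proof (rule sum_sq_indep(2)[OF S(1)])
    fix i assume i: "i \<in> S"
    show "integrable M (U i)" unfolding U_def using tr[OF i, of "\<lambda>x. x - \<mu>"] mo by auto
    show "integrable M (\<lambda>\<omega>. (norm (U i \<omega>))^2)" unfolding U_def using tr[OF i, of "\<lambda>x. norm (x - \<mu>) ^ 2"] mo by auto
    show "expectation (U i) = 0" unfolding U_def using tr[OF i, of "\<lambda>x. x - \<mu>"] mo by auto
    show "expectation (\<lambda>\<omega>. (norm (U i \<omega>))^2) = s" unfolding U_def using tr[OF i, of "\<lambda>x. norm (x - \<mu>) ^ 2"] mo s_def by auto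
  next
    fix i l assume "i \<in> S" "l \<in> S" "i \<noteq> l"
    then show "indep_var borel (U i) borel (U l)" unfolding U_def
      using indep_var_compose[OF indp, of i l "\<lambda>x. x - \<mu>" borel "\<lambda>x. x - \<mu>" borel] by (auto simp: comp_def)
  qed
  have iEU: "integrable M (\<lambda>\<omega>. (norm (\<Sum>i\<in>S. U i \<omega>))^2)"
  proof (rule sum_sq_indep(1)[OF S(1)])
    fix i assume i: "i \<in> S"
    show "integrable M (U i)" unfolding U_def using tr[OF i, of "\<lambda>x. x - \<mu>"] mo by auto
    show "integrable M (\<lambda>\<omega>. (norm (U i \<omega>))^2)" unfolding U_def using tr[OF i, of "\<lambda>x. norm (x - \<mu>) ^ 2"] mo by auto
    show "expectation (U i) = 0" unfolding U_def using tr[OF i, of "\<lambda>x. x - \<mu>"] mo by auto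
    show "expectation (\<lambda>\<omega>. (norm (U i \<omega>))^2) = s" unfolding U_def using tr[OF i, of "\<lambda>x. norm (x - \<mu>) ^ 2"] mo s_def by auto
  next
    fix i l assume "i \<in> S" "l \<in> S" "i \<noteq> l"
    then show "indep_var borel (U i) borel (U l)" unfolding U_def
      using indep_var_compose[OF indp, of i l "\<lambda>x. x - \<mu>" borel "\<lambda>x. x - \<mu>" borel] by (auto simp: comp_def)
  qed
  define v where "v = expectation (\<lambda>\<omega>. norm (X 0 \<omega> - \<mu>) ^ 4) - s^2"
  have Vfacts: "integrable M (V i) \<and> integrable M (\<lambda>\<omega>. (norm (V i \<omega>))^2) \<and> expectation (V i) = 0
      \<and> expectation (\<lambda>\<omega>. (norm (V i \<omega>))^2) = v" if i: "i \<in> S" for i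
  proof -
    have a: "integrable M (V i) \<and> expectation (V i) = 0"
      unfolding V_def using tr[OF i, of "\<lambda>x. norm (x - \<mu>) ^ 2 - s"] mo by auto
    have b: "integrable M (\<lambda>\<omega>. (V i \<omega>)^2) \<and> expectation (\<lambda>\<omega>. (V i \<omega>)^2) = v"
      unfolding V_def v_def using tr[OF i, of "\<lambda>x. (norm (x - \<mu>) ^ 2 - s)^2"] mo by auto
    show ?thesis using a b by simp
  qed
  have indV: "indep_var borel (V i) borel (V l)" if "i \<in> S" "l \<in> S" "i \<noteq> l" for i l
    unfolding V_def using indep_var_compose[OF indp[OF that], of "\<lambda>x. norm (x - \<mu>) ^ 2 - s" borel "\<lambda>x. norm (x - \<mu>) ^ 2 - s" borel]
    by (auto simp: comp_def)
  have EV: "expectation (\<lambda>\<omega>. (norm (\<Sum>i\<in>S. V i \<omega>))^2) = real (card S) * v"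
    by (rule sum_sq_indep(2)[OF S(1)]) (use Vfacts indV in auto)
  have iEV: "integrable M (\<lambda>\<omega>. (norm (\<Sum>i\<in>S. V i \<omega>))^2)"
    by (rule sum_sq_indep(1)[OF S(1)]) (use Vfacts indV in auto)
  have m0: "(0::real) < real m" using S by simp
  have eqA: "(norm ((1 / real (card S)) *\<^sub>R (\<Sum>i\<in>S. X i \<omega>) - \<mu>))^2 = (1 / real m)^2 * (norm (\<Sum>i\<in>S. U i \<omega>))^2" for \<omega>
    unfolding U_def mean_shift[OF S(1) S(3) S(4)] S(3) using m0 by (simp add: power_divide)
  have eqB: "((1 / real m) * (\<Sum>i\<in>S. (norm (X i \<omega> - \<mu>))^2) - s)^2 = (1 / real m)^2 * (norm (\<Sum>i\<in>S. V i \<omega>))^2" for \<omega>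
    unfolding V_def real_shift[OF S(1) S(3) S(4)] by (simp add: power_divide)
  define A where "A = {\<omega>\<in>space M. s / ((6/100) * real m) \<le> (1 / real m)^2 * (norm (\<Sum>i\<in>S. U i \<omega>))^2}"
  define B where "B = {\<omega>\<in>space M. ((33/100) * s)^2 \<le> (1 / real m)^2 * (norm (\<Sum>i\<in>S. V i \<omega>))^2}"
  have Um[measurable]: "U i \<in> borel_measurable M" if "i \<in> S" for i unfolding U_def using that by measurable
  have Vm[measurable]: "V i \<in> borel_measurable M" if "i \<in> S" for i unfolding V_def using that by measurable
  have Aev: "A \<in> events" unfolding A_def by measurable
  have Bev: "B \<in> events" unfolding B_def by measurable
  have PA: "prob A \<le> 6/100"
  proof -
    have "prob A \<le> expectation (\<lambda>\<omega>. (1 / real m)^2 * (norm (\<Sum>i\<in>S. U i \<omega>))^2) / (s / ((6/100) * real m))"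
      unfolding A_def using iEU s0 m0
      by (intro integral_Markov_inequality_measure[where A="space M"]) auto
    also have "\<dots> = 6/100" using EU s0 m0 S(3) by (simp add: field_simps power2_eq_square)
    finally show ?thesis .
  qed
  have PB: "prob B \<le> 1/25"
  proof -
    have "prob B \<le> expectation (\<lambda>\<omega>. (1 / real m)^2 * (norm (\<Sum>i\<in>S. V i \<omega>))^2) / (((33/100) * s)^2)"
      unfolding B_def using iEV s0 m0
      by (intro integral_Markov_inequality_measure[where A="space M"]) auto
    also have "\<dots> = v / real m / (((33/100) * s)^2)" using EV m0 S(3) by (simp add: field_simps power2_eq_square)
    also have "\<dots> \<le> 1/25"
    proof -
      have "v \<le> 1/25 * ((33/100) * s)^2 * real m" using vb unfolding v_def .
      then show ?thesis using s0 m0 by (simp add: field_simps)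
    qed
    finally show ?thesis .
  qed
  have "{\<omega>\<in>space M. s / ((6/100) * real m) \<le> (norm ((1 / real (card S)) *\<^sub>R (\<Sum>i\<in>S. X i \<omega>) - \<mu>))^2
            \<or> ((33/100) * s)^2 \<le> ((1 / real m) * (\<Sum>i\<in>S. (norm (X i \<omega> - \<mu>))^2) - s)^2} = A \<union> B"
    unfolding A_def B_def eqA eqB by auto
  moreover have "prob (A \<union> B) \<le> prob A + prob B" using Aev Bev by (rule measure_Un_le)
  ultimately show ?thesis using PA PB by simp
qed

theorem mainTheorem9:
  fixes M :: "'b measure"
    and X :: "nat \<Rightarrow> 'b \<Rightarrow> 'a::{real_inner, banach, second_countable_topology}"
    and \<mu> :: 'a
    and n :: nat and \<delta> :: real
    and G :: "nat \<Rightarrow> nat set"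
    and \<mu>hat :: "'b \<Rightarrow> 'a" and That :: "'b \<Rightarrow> real"
  assumes "prob_space M"
    and rv: "\<And>i. i < n \<Longrightarrow> X i \<in> borel_measurable M"
    and indep: "prob_space.indep_vars M (\<lambda>_. borel) X {..<n}"
    and ident: "\<And>i. i < n \<Longrightarrow> distr M borel (X i) = distr M borel (X 0)"
    and int1: "integrable M (X 0)"
    and mean: "prob_space.expectation M (X 0) = \<mu>"
    and int4: "integrable M (\<lambda>\<omega>. norm (X 0 \<omega> - \<mu>) ^ 4)"
    and trpos: "prob_space.expectation M (\<lambda>\<omega>. norm (X 0 \<omega> - \<mu>) ^ 2) > 0"
    and \<delta>: "0 < \<delta>" "\<delta> < 1"
    and kn: "2 * num_groups \<delta> \<le> n"
    and G_sub: "\<And>j. j < num_groups \<delta> \<Longrightarrow> G j \<subseteq> {..<n}"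
    and G_card: "\<And>j. j < num_groups \<delta> \<Longrightarrow> card (G j) = n div num_groups \<delta>"
    and G_disj: "\<And>j j'. j < num_groups \<delta> \<Longrightarrow> j' < num_groups \<delta> \<Longrightarrow> j \<noteq> j' \<Longrightarrow>
                   G j \<inter> G j' = {}"
    and med_mu: "\<And>\<omega>. \<omega> \<in> space M \<Longrightarrow> is_geometric_median (num_groups \<delta>)
                   (\<lambda>j. (1 / real (card (G j))) *\<^sub>R (\<Sum>i\<in>G j. X i \<omega>)) (\<mu>hat \<omega>)"
    and med_T: "\<And>\<omega>. \<omega> \<in> space M \<Longrightarrow> is_geometric_median (num_groups \<delta>)
                   (\<lambda>j. (1 / real (card (G j))) *
                      (\<Sum>i\<in>G j. (norm (X i \<omega> -
                         (1 / real (card (G j))) *\<^sub>R (\<Sum>l\<in>G j. X l \<omega>))) ^ 2)) (That \<omega>)"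
    and cond: "15.2 * sqrt ((prob_space.expectation M (\<lambda>\<omega>. norm (X 0 \<omega> - \<mu>) ^ 4)
                   - (prob_space.expectation M (\<lambda>\<omega>. norm (X 0 \<omega> - \<mu>) ^ 2)) ^ 2)
                 / (prob_space.expectation M (\<lambda>\<omega>. norm (X 0 \<omega> - \<mu>) ^ 2)) ^ 2)
               \<le> (1/2 - 178 * ln (1.4 / \<delta>) / real n) * sqrt (real n / ln (1.4 / \<delta>))"
  shows "\<exists>A\<in>sets M. A \<subseteq> {\<omega>\<in>space M.
            \<mu> \<in> cball (\<mu>hat \<omega>) (11 * sqrt 2 * sqrt (That \<omega> * ln (1.4 / \<delta>) / real n))}
          \<and> measure M A \<ge> 1 - 2 * \<delta>"
proof -
  interpret prob_space M by fact
  define k where "k = num_groups \<delta>"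
  define m where "m = n div k"
  define L where "L = ln (1.4 / \<delta>)"
  define s where "s = expectation (\<lambda>\<omega>. norm (X 0 \<omega> - \<mu>) ^ 2)"
  define e4 where "e4 = expectation (\<lambda>\<omega>. norm (X 0 \<omega> - \<mu>) ^ 4)"
  have s0: "0 < s" using trpos s_def by simp
  note nf = num_facts[OF \<delta>, folded k_def L_def]
  have k1: "1 \<le> k" and L0: "0 < L" and kL: "real k \<le> (385/100) * L"
    and expk: "exp (- real k * psi (7/18) (1/10)) < \<delta>" using nf by auto
  have n0: "0 < n" using kn k1 unfolding k_def by simp
  have X0m[measurable]: "X 0 \<in> borel_measurable M" using rv n0 by simp
  note mo = moments0[OF X0m int1 mean int4, folded s_def e4_def]
  have v0: "0 \<le> e4 - s^2"
  proof -
    have "0 \<le> expectation (\<lambda>\<omega>. (norm (X 0 \<omega> - \<mu>) ^ 2 - s)^2)" by (rule integral_nonneg_AE) simp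
    then show ?thesis using mo(7) by simp
  qed
  have cond': "15.2 * sqrt ((e4 - s^2) / s^2) \<le> (1/2 - 178 * L / real n) * sqrt (real n / L)"
    using cond unfolding s_def[symmetric] e4_def[symmetric] L_def[symmetric] .
  note cf = cond_facts[OF L0 s0 n0 v0 cond']
  have mk: "real m * real k \<le> real n" "real n < (real m + 1) * real k"
  proof -
    have e: "n = m * k + n mod k" unfolding m_def by simp
    have "n mod k < k" using k1 by simp
    then show "real m * real k \<le> real n" "real n < (real m + 1) * real k"
      using e by (metis of_nat_add of_nat_mult of_nat_le_iff le_add1, simp add: algebra_simps)
         (metis add_less_mono1 e of_nat_add of_nat_less_iff of_nat_mult distrib_right mult_1 of_nat_1 add.commute)
  qed
  have nmL: "real n \<le> (385/100) * (real m + 1) * L"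
  proof -
    have "(real m + 1) * real k \<le> (real m + 1) * ((385/100) * L)" using kL by (intro mult_left_mono) auto
    then show ?thesis using mk(2) by (simp add: algebra_simps)
  qed
  have m92: "92 \<le> m"
  proof (rule ccontr)
    assume "\<not> 92 \<le> m"
    then have "real m + 1 \<le> 92" by simp
    then have "(385/100) * (real m + 1) * L \<le> (385/100) * 92 * L" using L0 by (intro mult_right_mono) auto
    then show False using nmL cf(1) L0 by linarith
  qed
  have vb: "e4 - s^2 \<le> 1/25 * ((33/100) * s)^2 * real m" by (rule q2_fact[OF L0 s0 m92 cf(2) nmL])
  have Gs: "G j \<subseteq> {..<n}" "finite (G j)" "card (G j) = m" if "j < k" for j
    using G_sub[of j] G_card[of j] that unfolding k_def m_def by (auto intro: finite_subset)
  have m0: "0 < m" using m92 by simp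
  define bad where "bad j \<omega> \<longleftrightarrow> s / ((6/100) * real m) \<le> (norm ((1 / real (card (G j))) *\<^sub>R (\<Sum>i\<in>G j. X i \<omega>) - \<mu>))^2
            \<or> ((33/100) * s)^2 \<le> ((1 / real m) * (\<Sum>i\<in>G j. (norm (X i \<omega> - \<mu>))^2) - s)^2" for j \<omega>
  define \<Phi> where "\<Phi> j f = (if s / ((6/100) * real m) \<le> (norm ((1 / real (card (G j))) *\<^sub>R (\<Sum>i\<in>G j. f i) - \<mu>))^2
            \<or> ((33/100) * s)^2 \<le> ((1 / real m) * (\<Sum>i\<in>G j. (norm (f i - \<mu>))^2) - s)^2 then 1 else 0::real)" for j f
  define Z where "Z j \<omega> = \<Phi> j (restrict (\<lambda>i. X i \<omega>) (G j))" for j \<omega>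
  have Zbad: "Z j \<omega> = (if bad j \<omega> then 1 else 0)" for j \<omega>
    unfolding Z_def \<Phi>_def bad_def by simp
  have indX: "indep_vars (\<lambda>_. borel) X {..<n}" using indep .
  have indZ: "indep_vars (\<lambda>_. borel) Z {..<k}"
    unfolding Z_def
  proof (rule block_indep[OF indX])
    show "G j \<subseteq> {..<n}" if "j < k" for j using Gs[OF that] by simp
    show "disjoint_family_on G {..<k}" unfolding disjoint_family_on_def using G_disj unfolding k_def by auto
    show "\<Phi> j \<in> borel_measurable (PiM (G j) (\<lambda>_. borel))" if "j < k" for j unfolding \<Phi>_def by measurable
  qed
  have Zm[measurable]: "Z j \<in> borel_measurable M" if "j < k" for j using indZ that by (auto simp: indep_vars_def)
  have EZ: "expectation (Z j) \<le> 1/10" if j: "j < k" for j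
  proof -
    have Bev: "{\<omega>\<in>space M. bad j \<omega>} \<in> events"
    proof -
      have "{\<omega>\<in>space M. bad j \<omega>} = {\<omega>\<in>space M. Z j \<omega> = 1}" unfolding Zbad by auto
      also have "\<dots> \<in> events" using j by measurable
      finally show ?thesis .
    qed
    have "expectation (Z j) = expectation (indicator {\<omega>\<in>space M. bad j \<omega>})"
      by (intro Bochner_Integration.integral_cong) (auto simp: Zbad indicator_def)
    also have "\<dots> = prob {\<omega>\<in>space M. bad j \<omega>}" using Bev by simp
    also have "\<dots> \<le> 1/10" unfolding bad_def
      by (rule group_bad[OF indX rv ident int1 mean int4 Gs(2)[OF j] Gs(1)[OF j] Gs(3)[OF j] m0 s_def s0])
         (use vb e4_def in simp_all)
    finally show ?thesis .
  qed
  have chern: "prob {\<omega>\<in>space M. 7/18 * real k \<le> (\<Sum>j<k. Z j \<omega>)} < \<delta>"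
  proof -
    have "prob {\<omega>\<in>space M. 7/18 * real k \<le> (\<Sum>j<k. Z j \<omega>)} \<le> (81/55)^k / (63/11) powr (7/18 * real k)"
      by (rule chernoff_count[OF indZ]) (use EZ in \<open>auto simp: Zbad\<close>)
    then show ?thesis using expk unfolding chernoff_value by simp
  qed
  define A where "A = {\<omega>\<in>space M. (\<Sum>j<k. Z j \<omega>) < 7/18 * real k}"
  have Aev: "A \<in> events" unfolding A_def by measurable
  have PA: "1 - 2 * \<delta> \<le> prob A"
  proof -
    have "space M - A = {\<omega>\<in>space M. 7/18 * real k \<le> (\<Sum>j<k. Z j \<omega>)}" unfolding A_def by auto
    then have "prob (space M - A) < \<delta>" using chern by simp
    then show ?thesis using prob_compl[OF Aev] \<delta> by simp
  qed
  have incl: "\<mu> \<in> cball (\<mu>hat \<omega>) (11 * sqrt 2 * sqrt (That \<omega> * ln (1.4 / \<delta>) / real n))" if \<omega>A: "\<omega> \<in> A" for \<omega>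
  proof -
    have \<omega>: "\<omega> \<in> space M" using \<omega>A unfolding A_def by simp
    define B where "B = {j\<in>{..<k}. bad j \<omega>}"
    have "(\<Sum>j<k. Z j \<omega>) = real (card B)"
      unfolding Zbad B_def sum_if_count by simp
    then have cB: "18 * card B < 7 * k" using \<omega>A unfolding A_def by simp
    define r where "r = sqrt (s / ((6/100) * real m))"
    define mh where "mh j = (1 / real (card (G j))) *\<^sub>R (\<Sum>i\<in>G j. X i \<omega>)" for j
    define W where "W j = (1 / real m) * (\<Sum>i\<in>G j. (norm (X i \<omega> - \<mu>))^2)" for j
    define c where "c = ((67/100) - 1 / ((6/100) * real m)) * s"
    have good: "norm (mh j - \<mu>) \<le> r \<and> c \<le> (1 / real (card (G j))) *
                      (\<Sum>i\<in>G j. (norm (X i \<omega> - (1 / real (card (G j))) *\<^sub>R (\<Sum>l\<in>G j. X l \<omega>))) ^ 2)"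
      if j: "j < k" and nb: "\<not> bad j \<omega>" for j
    proof
      have h1: "(norm (mh j - \<mu>))^2 < s / ((6/100) * real m)" and
           h2: "(W j - s)^2 < ((33/100) * s)^2"
        using nb unfolding bad_def mh_def W_def by auto
      show "norm (mh j - \<mu>) \<le> r" unfolding r_def using h1 by (intro real_le_rsqrt) simp
      have "\<bar>W j - s\<bar>^2 < ((33/100) * s)^2" using h2 by (simp only: power2_abs)
      then have "\<bar>W j - s\<bar> < (33/100) * s" by (rule power_less_imp_less_base) (use s0 in simp)
      then have Wl: "(67/100) * s < W j" using abs_ge_minus_self[of "W j - s"] by linarith
      have "(1 / real (card (G j))) * (\<Sum>i\<in>G j. (norm (X i \<omega> - (1 / real (card (G j))) *\<^sub>R (\<Sum>l\<in>G j. X l \<omega>))) ^ 2)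
            = W j - (norm (mh j - \<mu>))^2"
        unfolding Gs(3)[OF j] mh_def W_def by (rule var_identity[OF Gs(2)[OF j] Gs(3)[OF j] m0])
      moreover have "s / ((6/100) * real m) = 1 / ((6/100) * real m) * s" by simp
      ultimately show "c \<le> (1 / real (card (G j))) * (\<Sum>i\<in>G j. (norm (X i \<omega> - (1 / real (card (G j))) *\<^sub>R (\<Sum>l\<in>G j. X l \<omega>))) ^ 2)"
        using Wl h1 unfolding c_def by (simp add: algebra_simps)
    qed
    have Tc: "c \<le> That \<omega>"
    proof (rule median_lower[OF med_T[OF \<omega>, folded k_def]])
      have "{j\<in>{..<k}. \<not> c \<le> (1 / real (card (G j))) *
                      (\<Sum>i\<in>G j. (norm (X i \<omega> - (1 / real (card (G j))) *\<^sub>R (\<Sum>l\<in>G j. X l \<omega>))) ^ 2)} \<subseteq> B"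
        unfolding B_def using good by auto
      then have "card {j\<in>{..<k}. \<not> c \<le> (1 / real (card (G j))) *
                      (\<Sum>i\<in>G j. (norm (X i \<omega> - (1 / real (card (G j))) *\<^sub>R (\<Sum>l\<in>G j. X l \<omega>))) ^ 2)} \<le> card B"
        by (intro card_mono) (auto simp: B_def)
      then show "2 * card {j\<in>{..<k}. \<not> c \<le> (1 / real (card (G j))) *
                      (\<Sum>i\<in>G j. (norm (X i \<omega> - (1 / real (card (G j))) *\<^sub>R (\<Sum>l\<in>G j. X l \<omega>))) ^ 2)} < k"
        using cB by linarith
    qed
    define b where "b = card {j\<in>{..<k}. \<not> norm (mh j - \<mu>) \<le> r}"
    define g where "g = card {j\<in>{..<k}. norm (mh j - \<mu>) \<le> r}"
    have bB: "b \<le> card B" unfolding b_def B_def using good by (intro card_mono) auto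
    have gb: "g + b = k" unfolding g_def b_def using card_split_count[of k "\<lambda>j. norm (mh j - \<mu>) \<le> r"] by simp
    have bg: "11 * b < 7 * g" using bB cB gb by linarith
    have bg2: "121 * b^2 \<le> 49 * g^2"
    proof -
      have "(11 * b)^2 \<le> (7 * g)^2" using bg by (intro power_mono) auto
      then show ?thesis by (simp add: power_mult_distrib)
    qed
    have gm: "norm (\<mu>hat \<omega> - \<mu>) \<le> (13/10) * r"
    proof (rule gm_bound[OF med_mu[OF \<omega>, folded k_def mh_def]])
      show "0 \<le> r" unfolding r_def using s0 m0 by simp
      show "1 < (13/10::real)" by simp
      have "real (121 * b^2) \<le> real (49 * g^2)" using bg2 by (simp only: of_nat_le_iff)
      then have "121 * (real b)^2 \<le> 49 * (real g)^2" by simp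
      then have "169 * (real b)^2 \<le> 69 * (real g)^2" using zero_le_power2[of "real g"] by linarith
      then show "(13/10)^2 * (real (card {j\<in>{..<k}. \<not> norm (mh j - \<mu>) \<le> r}))^2
               \<le> ((13/10)^2 - 1) * (real (card {j\<in>{..<k}. norm (mh j - \<mu>) \<le> r}))^2"
        unfolding b_def[symmetric] g_def[symmetric] by (simp add: power_divide)
      show "0 < card {j\<in>{..<k}. norm (mh j - \<mu>) \<le> r}" using bg unfolding g_def[symmetric] by simp
    qed
    have rad: "(13/10) * r \<le> 11 * sqrt 2 * sqrt (That \<omega> * L / real n)"
      unfolding r_def by (rule radius_fact[OF L0 s0 m92 n0 nmL]) (use Tc c_def in simp)
    show ?thesis using gm rad unfolding L_def by (simp add: dist_norm)
  qed
  show ?thesis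
  proof (intro bexI[of _ A] conjI)
    show "A \<subseteq> {\<omega> \<in> space M. \<mu> \<in> cball (\<mu>hat \<omega>) (11 * sqrt 2 * sqrt (That \<omega> * ln (1.4 / \<delta>) / real n))}"
      using incl by (auto simp: A_def)
    show "1 - 2 * \<delta> \<le> measure M A" using PA .
    show "A \<in> sets M" using Aev .
  qed
qed

end
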